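(* Let $R$ be a ring such that $\operatorname{Nil}^*(R)=0$ and $R$ satisfies Köthe's conjecture, and suppose that $xy\in\operatorname{Nil}(R)$ for all $x,y\in\operatorname{Nil}(R)$ with $x^2=0$. Let $r\in\mathbb{N}$ and $x_1,\ldots,x_r\in\operatorname{Nil}(R)$ with $x_1^n=0$ for some $n\in\mathbb{N}$. Then $$x_1^{n_1}x_2x_1^{n_2}x_3\cdots x_1^{n_{r-1}}x_rx_1^{n_r}=0$$ for all positive integers $n_1,\ldots,n_r$ with $n_1+\cdots+n_r\ge n$. In particular, $\operatorname{Nil}(R)$ is multiplicatively closed.
   Context: Rings are associative and not necessarily unital. $\operatorname{Nil}(R)$ is the set of nilpotent elements of $R$; $\operatorname{Nil}^*(R)$ is the upper nilradical, the sum of all nil two-sided ideals of $R$. $R$ satisfies Köthe's conjecture if every nil left ideal of $R$ is contained in a nil two-sided ideal. $\mathbb{N}$ denotes the positive integers. *)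

theory Defs
  imports Main
begin

text \<open>Rings are associative, not necessarily unital: type class ring (no 1).
  Positive powers x^k (k >= 1) are defined without a unit.
  rpow x k denotes x^k for k >= 1; the value at k = 0 is a dummy (0) and
  is never used: all exponents below are required to be positive.\<close>

fun rpow :: "'a::ring \<Rightarrow> nat \<Rightarrow> 'a" where
  "rpow x 0 = 0"
| "rpow x (Suc 0) = x"
| "rpow x (Suc (Suc k)) = x * rpow x (Suc k)"

text \<open>Product of a nonempty list, left to right (empty product is a dummy 0).\<close>
fun lprod :: "'a::ring list \<Rightarrow> 'a" where
  "lprod [] = 0"
| "lprod [a] = a"
| "lprod (a # b # l) = a * lprod (b # l)"

definition nilset :: "'a::ring set" where
  "nilset = {x. \<exists>k\<ge>1. rpow x k = 0}"

definition add_subgroup :: "'a::ring set \<Rightarrow> bool" where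
  "add_subgroup I \<longleftrightarrow> 0 \<in> I \<and> (\<forall>a\<in>I. \<forall>b\<in>I. a - b \<in> I)"

definition left_ideal :: "'a::ring set \<Rightarrow> bool" where
  "left_ideal I \<longleftrightarrow> add_subgroup I \<and> (\<forall>r a. a \<in> I \<longrightarrow> r * a \<in> I)"

definition two_sided_ideal :: "'a::ring set \<Rightarrow> bool" where
  "two_sided_ideal I \<longleftrightarrow> add_subgroup I \<and> (\<forall>r a. a \<in> I \<longrightarrow> r * a \<in> I \<and> a * r \<in> I)"

definition nil_set :: "'a::ring set \<Rightarrow> bool" where
  "nil_set I \<longleftrightarrow> I \<subseteq> nilset"

text \<open>Upper nilradical: the sum of all nil two-sided ideals (all finite sums).\<close>
inductive_set upper_nilradical :: "'a::ring set" where
  zero: "0 \<in> upper_nilradical"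
| mem: "two_sided_ideal I \<Longrightarrow> nil_set I \<Longrightarrow> x \<in> I \<Longrightarrow> x \<in> upper_nilradical"
| add: "a \<in> upper_nilradical \<Longrightarrow> b \<in> upper_nilradical \<Longrightarrow> a + b \<in> upper_nilradical"

definition koethe :: "'a::ring itself \<Rightarrow> bool" where
  "koethe _ \<longleftrightarrow> (\<forall>L::'a set. left_ideal L \<and> nil_set L \<longrightarrow>
      (\<exists>I. two_sided_ideal I \<and> nil_set I \<and> L \<subseteq> I))"

text \<open>The word x1^{n1} x2 x1^{n2} x3 ... x1^{n(r-1)} xr x1^{nr}, indices 1..r.\<close>
definition word :: "(nat \<Rightarrow> 'a::ring) \<Rightarrow> (nat \<Rightarrow> nat) \<Rightarrow> nat \<Rightarrow> 'a" where
  "word x ns r = lprod (concat (map (\<lambda>i. rpow (x 1) (ns i) # (if i < r then [x (i + 1)] else []))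
                                   [1..<r + 1]))"

end

theory Submission
  imports Defs
begin

lemma lprod_Cons: "l \<noteq> [] \<Longrightarrow> lprod (a # l) = a * lprod l"
  by (cases l) auto

lemma lprod_append: "xs \<noteq> [] \<Longrightarrow> ys \<noteq> [] \<Longrightarrow> lprod (xs @ ys) = lprod xs * lprod ys"
proof (induction xs)
  case Nil then show ?case by simp
next
  case (Cons a xs)
  show ?case
  proof (cases "xs = []")
    case True then show ?thesis using Cons by (simp add: lprod_Cons)
  next
    case False then show ?thesis using Cons by (simp add: lprod_Cons mult.assoc)
  qed
qed

lemma rpow_Suc: "k \<ge> 1 \<Longrightarrow> rpow x (Suc k) = x * rpow x k"
  by (cases k) auto

lemma rpow_Suc_right: "k \<ge> 1 \<Longrightarrow> rpow x (Suc k) = rpow x k * x"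
proof (induction k rule: nat_induct_at_least)
  case base then show ?case by simp
next
  case (Suc k)
  then have "rpow x (Suc (Suc k)) = x * rpow x (Suc k)" by (simp add: rpow_Suc)
  also have "\<dots> = x * (rpow x k * x)" using Suc by simp
  also have "\<dots> = rpow x (Suc k) * x" using Suc by (simp add: rpow_Suc) (metis mult.assoc)
  finally show ?case .
qed

lemma rpow_add: "a \<ge> 1 \<Longrightarrow> b \<ge> 1 \<Longrightarrow> rpow x (a + b) = rpow x a * rpow x b"
proof (induction a rule: nat_induct_at_least)
  case base then show ?case by (simp add: rpow_Suc)
next
  case (Suc k)
  have "rpow x (Suc k + b) = x * rpow x (k + b)" using Suc by (simp add: rpow_Suc)
  also have "\<dots> = x * (rpow x k * rpow x b)" using Suc by simp
  also have "\<dots> = rpow x (Suc k) * rpow x b" using Suc by (simp add: rpow_Suc mult.assoc)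
  finally show ?case .
qed

lemma rpow_ge: "rpow x n = 0 \<Longrightarrow> n \<ge> 1 \<Longrightarrow> m \<ge> n \<Longrightarrow> rpow x m = 0"
proof -
  assume a: "rpow x n = 0" "n \<ge> 1" "m \<ge> n"
  show ?thesis
  proof (cases "m = n")
    case True then show ?thesis using a by simp
  next
    case False
    then have "m = n + (m - n)" "m - n \<ge> 1" using a by auto
    then show ?thesis using a rpow_add[of n "m - n" x] by simp
  qed
qed

lemma rpow_shift: "m \<ge> 1 \<Longrightarrow> rpow (a * b) (Suc m) = a * rpow (b * a) m * b"
proof (induction m rule: nat_induct_at_least)
  case base then show ?case by (simp add: mult.assoc)
next
  case (Suc k)
  have "rpow (a * b) (Suc (Suc k)) = (a * b) * rpow (a * b) (Suc k)"
    by (simp add: rpow_Suc)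
  also have "\<dots> = (a * b) * (a * rpow (b * a) k * b)" using Suc by simp
  also have "\<dots> = a * ((b * a) * rpow (b * a) k) * b" by (simp add: mult.assoc)
  also have "\<dots> = a * rpow (b * a) (Suc k) * b" using Suc by (simp add: rpow_Suc)
  finally show ?case .
qed

lemma in_nilset: "x \<in> nilset \<longleftrightarrow> (\<exists>k\<ge>1. rpow x k = 0)"
  by (simp add: nilset_def)

lemma lemmaB:
  fixes c :: "'a::ring"
  assumes radical: "(upper_nilradical :: 'a set) = {0}"
    and kothe: "koethe TYPE('a)"
    and all: "\<forall>t. t * c \<in> nilset"
  shows "c = 0"
proof -
  let ?L = "{t * c | t. True}"
  have li: "left_ideal ?L"
    unfolding left_ideal_def add_subgroup_def
  proof (intro conjI ballI allI impI)
    show "0 \<in> ?L" by (rule CollectI, rule exI[of _ 0]) simp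
  next
    fix a b assume "a \<in> ?L" "b \<in> ?L"
    then obtain s u where "a = s * c" "b = u * c" by auto
    then have "a - b = (s - u) * c" by (simp add: left_diff_distrib)
    then show "a - b \<in> ?L" by blast
  next
    fix r a assume "a \<in> ?L"
    then obtain s where "a = s * c" by auto
    then have "r * a = (r * s) * c" by (simp add: mult.assoc)
    then show "r * a \<in> ?L" by blast
  qed
  have nl: "nil_set ?L" using all unfolding nil_set_def by auto
  from kothe li nl obtain I where I: "two_sided_ideal I" "nil_set I" "?L \<subseteq> I"
    unfolding koethe_def by blast
  have z: "\<forall>t. t * c = 0"
  proof
    fix t
    have "t * c \<in> I" using I by blast
    then have "t * c \<in> upper_nilradical" using I by (intro upper_nilradical.mem)
    then show "t * c = 0" using radical by blast
  qed
  let ?J = "{z::'a. \<forall>t. t * z = 0}"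
  have tj: "two_sided_ideal ?J"
    unfolding two_sided_ideal_def add_subgroup_def
    by (auto simp: right_diff_distrib mult.assoc[symmetric] simp del: mult.assoc)
  have nj: "nil_set ?J"
    unfolding nil_set_def nilset_def
  proof
    fix z assume "z \<in> ?J"
    then have "rpow z 2 = 0" by (simp add: numeral_2_eq_2)
    then show "z \<in> {x. \<exists>k\<ge>1. rpow x k = 0}" by (intro CollectI exI[of _ 2]) simp
  qed
  have "c \<in> ?J" using z by simp
  then have "c \<in> upper_nilradical" using tj nj by (intro upper_nilradical.mem)
  then show ?thesis using radical by blast
qed

lemma lemmaC:
  fixes p q y :: "'a::ring"
  assumes radical: "(upper_nilradical :: 'a set) = {0}"
    and kothe: "koethe TYPE('a)"
    and sq: "\<forall>a\<in>(nilset :: 'a set). \<forall>b\<in>nilset. a * a = 0 \<longrightarrow> a * b \<in> nilset"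
    and pq: "p * q = 0" and y: "y \<in> nilset"
  shows "p * y * q = 0"
proof (rule lemmaB[OF radical kothe], intro allI)
  fix t
  let ?d = "q * t * p"
  have dd: "?d * ?d = 0"
  proof -
    have "?d * ?d = q * t * (p * q) * t * p" by (simp add: mult.assoc)
    then show ?thesis using pq by simp
  qed
  have dN: "?d \<in> nilset" unfolding in_nilset
    by (rule exI[of _ 2]) (simp add: numeral_2_eq_2 dd)
  have "?d * y \<in> nilset" using sq dN y dd by blast
  then obtain m where m: "m \<ge> 1" "rpow (?d * y) m = 0" unfolding in_nilset by blast
  have "rpow ((t * p * y) * q) (Suc m) = (t * p * y) * rpow (q * (t * p * y)) m * q"
    by (rule rpow_shift[OF m(1)])
  also have "q * (t * p * y) = ?d * y" by (simp add: mult.assoc)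
  finally have "rpow ((t * p * y) * q) (Suc m) = 0" using m by simp
  moreover have "t * (p * y * q) = (t * p * y) * q" by (simp add: mult.assoc)
  ultimately show "t * (p * y * q) \<in> nilset" unfolding in_nilset by auto
qed

lemma word_cong: "(\<forall>i\<in>{1..r}. ns i = ns' i) \<Longrightarrow> word x ns r = word x ns' r"
  unfolding word_def by (intro arg_cong[where f=lprod] arg_cong[where f=concat] map_cong) auto

lemma word_one: "word x ns 1 = rpow (x 1) (ns 1)"
  unfolding word_def by simp

lemma word_one': "word x ns (Suc 0) = rpow (x 1) (ns 1)"
  unfolding word_def by simp

lemma word_Suc:
  assumes r: "r \<ge> 1"
  shows "word x ns (Suc r) = word x ns r * x (Suc r) * rpow (x 1) (ns (Suc r))"
proof -
  define g where "g = (\<lambda>r i. rpow (x 1) (ns i) # (if i < r then [x (i + 1)] else []))"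
  have u1: "[1..<Suc r + 1] = [1..<r] @ [r, Suc r]" using r by simp
  have u2: "[1..<r + 1] = [1..<r] @ [r]" using r by simp
  have mc: "map (g (Suc r)) [1..<r] = map (g r) [1..<r]"
    by (rule map_cong) (auto simp: g_def)
  define A where "A = concat (map (g r) [1..<r])"
  have w1: "word x ns r = lprod (A @ [rpow (x 1) (ns r)])"
    unfolding word_def g_def[symmetric] A_def u2 by (simp add: g_def)
  have w2a: "word x ns (Suc r) = lprod (concat (map (g (Suc r)) [1..<r]) @ [rpow (x 1) (ns r), x (Suc r), rpow (x 1) (ns (Suc r))])"
    unfolding word_def u1 by (simp add: g_def)
  have w2: "word x ns (Suc r) = lprod (A @ [rpow (x 1) (ns r), x (Suc r), rpow (x 1) (ns (Suc r))])"
    using w2a unfolding mc A_def .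
  show ?thesis
  proof (cases "A = []")
    case True then show ?thesis using w1 w2 by (simp add: mult.assoc)
  next
    case False then show ?thesis using w1 w2 by (simp add: lprod_append mult.assoc)
  qed
qed

lemma word_mult_last:
  assumes r: "r \<ge> 1" and ge: "ns r \<ge> 1" and m: "m \<ge> 1"
  shows "word x (ns(r := ns r + m)) r = word x ns r * rpow (x 1) m"
proof (cases r)
  case 0 then show ?thesis using r by simp
next
  case (Suc k)
  show ?thesis
  proof (cases "k = 0")
    case True then show ?thesis using Suc ge m by (simp add: word_one' rpow_add)
  next
    case False
    then have k: "k \<ge> 1" by simp
    have c: "word x (ns(r := ns r + m)) k = word x ns k"
      by (rule word_cong) (auto simp: Suc)
    show ?thesis using Suc word_Suc[OF k, of x "ns(r := ns r + m)"] word_Suc[OF k, of x ns] c ge m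
      by (simp add: rpow_add mult.assoc)
  qed
qed

lemma words:
  fixes x :: "nat \<Rightarrow> 'a::ring" and r n :: nat
  assumes radical: "(upper_nilradical :: 'a set) = {0}"
    and kothe: "koethe TYPE('a)"
    and sq: "\<forall>a\<in>(nilset :: 'a set). \<forall>b\<in>nilset. a * a = 0 \<longrightarrow> a * b \<in> nilset"
    and r: "r \<ge> 1"
    and n: "n \<ge> 1" and xn: "rpow (x 1) n = 0"
  shows "(\<forall>i\<in>{1..r}. x i \<in> nilset) \<longrightarrow>
     (\<forall>ns. (\<forall>i\<in>{1..r}. ns i \<ge> 1) \<and> (\<Sum>i=1..r. ns i) \<ge> n \<longrightarrow> word x ns r = 0)"
  using r
proof (induction r rule: nat_induct_at_least)
  case base
  show ?case
  proof (intro impI allI)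
    fix ns :: "nat \<Rightarrow> nat" assume "(\<forall>i\<in>{1..1}. ns i \<ge> 1) \<and> (\<Sum>i=1..1. ns i) \<ge> n"
    moreover have "sum ns {1..1::nat} = ns 1" by simp
    ultimately have "ns 1 \<ge> n" by linarith
    then show "word x ns 1 = 0" using rpow_ge[OF xn n] by (simp add: word_one')
  qed
next
  case (Suc r)
  show ?case
  proof (intro impI allI)
    assume xs: "\<forall>i\<in>{1..Suc r}. x i \<in> nilset"
    fix ns :: "nat \<Rightarrow> nat" assume h: "(\<forall>i\<in>{1..Suc r}. ns i \<ge> 1) \<and> (\<Sum>i=1..Suc r. ns i) \<ge> n"
    define ns' where "ns' = ns(r := ns r + ns (Suc r))"
    have xs': "\<forall>i\<in>{1..r}. x i \<in> nilset" using xs by auto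
    have pos: "\<forall>i\<in>{1..r}. ns' i \<ge> 1" using h Suc.hyps by (auto simp: ns'_def intro: trans_le_add1)
    have s1: "(\<Sum>i=1..Suc r. ns i) = (\<Sum>i=1..r. ns i) + ns (Suc r)"
      using Suc.hyps by simp
    obtain k where k: "r = Suc k" using Suc.hyps by (cases r) auto
    have s2: "(\<Sum>i=1..r. ns' i) = (\<Sum>i=1..r. ns i) + ns (Suc r)"
    proof -
      have e: "{1..r} = insert r {1..k}" using k by auto
      have "(\<Sum>i=1..k. ns' i) = (\<Sum>i=1..k. ns i)"
        by (rule sum.cong) (auto simp: ns'_def k)
      then show ?thesis unfolding e by (simp add: ns'_def k)
    qed
    have "word x ns' r = 0" using Suc.IH xs' pos s1 s2 h by auto
    moreover have "word x ns' r = word x ns r * rpow (x 1) (ns (Suc r))"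
      unfolding ns'_def using Suc.hyps h by (intro word_mult_last) auto
    ultimately have pq: "word x ns r * rpow (x 1) (ns (Suc r)) = 0" by simp
    have "x (Suc r) \<in> nilset" using xs by auto
    then have "word x ns r * x (Suc r) * rpow (x 1) (ns (Suc r)) = 0"
      by (rule lemmaC[OF radical kothe sq pq])
    then show "word x ns (Suc r) = 0" using word_Suc[OF Suc.hyps, of x ns] by simp
  qed
qed

lemma word_ones:
  fixes a b :: "'a::ring"
  assumes "k \<ge> 1"
  shows "rpow (a * b) k = word (\<lambda>i. if i = 1 then a else b) (\<lambda>_. 1) k * b"
  using assms
proof (induction k rule: nat_induct_at_least)
  case base then show ?case by (simp add: word_one')
next
  case (Suc k)
  have "rpow (a * b) (Suc k) = rpow (a * b) k * (a * b)" using Suc by (simp add: rpow_Suc_right)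
  also have "\<dots> = word (\<lambda>i. if i = 1 then a else b) (\<lambda>_. 1) k * b * a * b" using Suc
    by (simp add: mult.assoc)
  also have "\<dots> = word (\<lambda>i. if i = 1 then a else b) (\<lambda>_. 1) (Suc k) * b"
    using word_Suc[OF Suc.hyps, of "\<lambda>i. if i = 1 then a else b" "\<lambda>_. 1"] Suc.hyps by simp
  finally show ?case .
qed

theorem lemma2p4:
  fixes x :: "nat \<Rightarrow> 'a::ring" and r n :: nat
  assumes radical: "(upper_nilradical :: 'a set) = {0}"
    and kothe: "koethe TYPE('a)"
    and sq: "\<forall>a\<in>(nilset :: 'a set). \<forall>b\<in>nilset. a * a = 0 \<longrightarrow> a * b \<in> nilset"
    and r: "r \<ge> 1"
    and xs: "\<forall>i\<in>{1..r}. x i \<in> nilset"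
    and n: "n \<ge> 1" and xn: "rpow (x 1) n = 0"
  shows "(\<forall>ns. (\<forall>i\<in>{1..r}. ns i \<ge> 1) \<and> (\<Sum>i=1..r. ns i) \<ge> n \<longrightarrow> word x ns r = 0)
         \<and> (\<forall>a\<in>(nilset :: 'a set). \<forall>b\<in>nilset. a * b \<in> nilset)"
proof
  show "\<forall>ns. (\<forall>i\<in>{1..r}. ns i \<ge> 1) \<and> (\<Sum>i=1..r. ns i) \<ge> n \<longrightarrow> word x ns r = 0"
    using words[where x=x, OF radical kothe sq r n xn] xs by blast
next
  show "\<forall>a\<in>(nilset :: 'a set). \<forall>b\<in>nilset. a * b \<in> nilset"
  proof (intro ballI)
    fix a b :: 'a assume a: "a \<in> nilset" and b: "b \<in> nilset"
    then obtain k where k: "k \<ge> 1" "rpow a k = 0" unfolding in_nilset by blast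
    let ?X = "\<lambda>i. if i = 1 then a else b"
    have "word ?X (\<lambda>_. 1) k = 0"
      using words[where x="?X", OF radical kothe sq k(1) k(1)] k a b by simp
    then have "rpow (a * b) k = 0" using word_ones[OF k(1), of a b] by simp
    then show "a * b \<in> nilset" using k unfolding in_nilset by blast
  qed
qed

end
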